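(* Let $\mathbf X\in\mathbb R^{n\times d}$ have full column rank and let $d\le k\le n$. Sample a set $S_\circ\subseteq\{1,\dots,n\}$ with $|S_\circ|=d$ with probability $\det(\mathbf X_{S_\circ})^2/\det(\mathbf X^\top\mathbf X)$, and then, given $S_\circ$, sample a uniformly random subset $R\subseteq\{1,\dots,n\}\setminus S_\circ$ of size $k-d$. Then $S=S_\circ\cup R$ satisfies, for every $S\subseteq\{1,\dots,n\}$ with $|S|=k$, $P(S)=\dfrac{\det(\mathbf X_S^\top\mathbf X_S)}{\binom{n-d}{k-d}\det(\mathbf X^\top\mathbf X)}$.
   Context: For $T\subseteq\{1,\dots,n\}$, $\mathbf X_T$ denotes the submatrix of $\mathbf X$ consisting of the rows indexed by $T$. *)

theory Defs
  imports "HOL-Probability.Probability" "Jordan_Normal_Form.DL_Rank" "Jordan_Normal_Form.DL_Submatrix"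
begin

(* X_T: submatrix of X consisting of the rows indexed by T (0-based indices, all columns) *)
definition rows_sub :: "real mat \<Rightarrow> nat set \<Rightarrow> real mat" where
  "rows_sub X T = submatrix X T {0..<dim_col X}"

definition volume_pmf :: "real mat \<Rightarrow> nat set pmf" where
  "volume_pmf X = embed_pmf (\<lambda>S0. if S0 \<subseteq> {0..<dim_row X} \<and> card S0 = dim_col X
      then (det (rows_sub X S0))\<^sup>2 / det (transpose_mat X * X) else 0)"

definition augmented_pmf :: "real mat \<Rightarrow> nat \<Rightarrow> nat set pmf" where
  "augmented_pmf X k = bind_pmf (volume_pmf X) (\<lambda>S0.
      bind_pmf (pmf_of_set {R. R \<subseteq> {0..<dim_row X} - S0 \<and> card R = k - dim_col X})
        (\<lambda>R. return_pmf (S0 \<union> R)))"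

end

theory Submission
  imports Defs
begin

lemma pick_bij:
  assumes "finite T"
  shows "bij_betw (pick T) {0..<card T} T"
proof -
  have inj: "inj_on (pick T) {0..<card T}"
    by (rule inj_onI, metis atLeastLessThan_iff nat_neq_iff pick_mono_le)
  have sub: "pick T ` {0..<card T} \<subseteq> T" using pick_in_set_le by auto
  have "card (pick T ` {0..<card T}) = card T" using card_image[OF inj] by simp
  then have "pick T ` {0..<card T} = T" using card_subset_eq[OF assms sub] by simp
  then show ?thesis using inj unfolding bij_betw_def by simp
qed

lemma cb_rows:
  fixes a :: "nat \<Rightarrow> nat \<Rightarrow> real"
  assumes S: "finite S"
  shows "mat d d (\<lambda>(i,j). \<Sum>r\<in>S. a r i * a r j) =
    mat\<^sub>r d d (\<lambda>i. finsum_vec TYPE(real) d (\<lambda>r. a r i \<cdot>\<^sub>v vec d (a r)) S)"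
  by (rule eq_matI, auto simp: index_finsum_vec[OF S] intro!: sum.cong)

lemma cb_step1:
  fixes a :: "nat \<Rightarrow> nat \<Rightarrow> real" and d :: nat
  assumes S: "finite S"
  defines "F \<equiv> {f. (\<forall>i\<in>{0..<d}. f i \<in> S) \<and> (\<forall>i. i \<notin> {0..<d} \<longrightarrow> f i = i)}"
  shows "det (mat d d (\<lambda>(i,j). \<Sum>r\<in>S. a r i * a r j)) =
    (\<Sum>f\<in>F. (\<Prod>i\<in>{0..<d}. a (f i) i) * det (mat d d (\<lambda>(i,j). a (f i) j)))"
proof -
  have "det (mat d d (\<lambda>(i,j). \<Sum>r\<in>S. a r i * a r j)) =
    (\<Sum>f\<in>F. det (mat\<^sub>r d d (\<lambda>i. a (f i) i \<cdot>\<^sub>v vec d (a (f i)))))"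
    unfolding cb_rows[OF S] F_def
    by (rule det_linear_rows_sum[OF S], auto)
  also have "\<dots> = (\<Sum>f\<in>F. (\<Prod>i\<in>{0..<d}. a (f i) i) * det (mat d d (\<lambda>(i,j). a (f i) j)))"
  proof (rule sum.cong[OF refl])
    fix f
    have "det (mat\<^sub>r d d (\<lambda>i. a (f i) i \<cdot>\<^sub>v vec d (a (f i)))) =
       (\<Prod>i\<in>{0..<d}. a (f i) i) * det (mat\<^sub>r d d (\<lambda>i. vec d (a (f i))))"
      by (rule det_rows_mul, auto)
    moreover have "mat\<^sub>r d d (\<lambda>i. vec d (a (f i))) = mat d d (\<lambda>(i,j). a (f i) j)"
      by (rule eq_matI, auto)
    ultimately show "det (mat\<^sub>r d d (\<lambda>i. a (f i) i \<cdot>\<^sub>v vec d (a (f i)))) =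
       (\<Prod>i\<in>{0..<d}. a (f i) i) * det (mat d d (\<lambda>(i,j). a (f i) j))" by simp
  qed
  finally show ?thesis .
qed

lemma det_noninj_zero:
  fixes a :: "nat \<Rightarrow> nat \<Rightarrow> real"
  assumes "\<not> inj_on f {0..<d}"
  shows "det (mat d d (\<lambda>(i,j). a (f i) j)) = 0"
proof -
  from assms obtain i j where ij: "i \<noteq> j" "i < d" "j < d" "f i = f j"
    unfolding inj_on_def by auto
  have "row (mat d d (\<lambda>(i,j). a (f i) j)) i = row (mat d d (\<lambda>(i,j). a (f i) j)) j"
    by (rule eq_vecI, insert ij, auto)
  then show ?thesis
    by (intro det_identical_rows[OF _ ij(1-3)], auto)
qed

lemma det_transpose_sum:
  fixes B :: "real mat"
  assumes "B \<in> carrier_mat d d"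
  shows "(\<Sum>p\<in>{p. p permutes {0..<d}}. signof p * (\<Prod>l\<in>{0..<d}. B $$ (p l, l))) = det B"
proof -
  have "det (transpose_mat B) = (\<Sum>p\<in>{p. p permutes {0..<d}}. signof p * (\<Prod>l\<in>{0..<d}. transpose_mat B $$ (l, p l)))"
    by (rule det_def', insert assms, auto)
  also have "\<dots> = (\<Sum>p\<in>{p. p permutes {0..<d}}. signof p * (\<Prod>l\<in>{0..<d}. B $$ (p l, l)))"
    using assms by (intro sum.cong refl arg_cong2[where f="(*)"] prod.cong, auto simp: permutes_in_image)
  finally show ?thesis using det_transpose[OF assms] by simp
qed

lemma cb_inner:
  fixes a :: "nat \<Rightarrow> nat \<Rightarrow> real" and d :: nat and T :: "nat set"
  defines "B \<equiv> mat d d (\<lambda>(i,j). a (pick T i) j)"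
  shows "(\<Sum>\<tau>\<in>{p. p permutes {0..<d}}. (\<Prod>l\<in>{0..<d}. a (pick T (\<tau> l)) l) *
            det (mat d d (\<lambda>(l,j). a (pick T (\<tau> l)) j))) = (det B)^2"
proof -
  have B: "B \<in> carrier_mat d d" unfolding B_def by auto
  have "(\<Sum>\<tau>\<in>{p. p permutes {0..<d}}. (\<Prod>l\<in>{0..<d}. a (pick T (\<tau> l)) l) *
            det (mat d d (\<lambda>(l,j). a (pick T (\<tau> l)) j)))
     = (\<Sum>\<tau>\<in>{p. p permutes {0..<d}}. det B * (signof \<tau> * (\<Prod>l\<in>{0..<d}. B $$ (\<tau> l, l))))"
  proof (rule sum.cong[OF refl])
    fix \<tau> assume "\<tau> \<in> {p. p permutes {0..<d}}"
    then have p: "\<tau> permutes {0..<d}" by simp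
    have tl: "\<And>i. i < d \<Longrightarrow> \<tau> i < d" using permutes_in_image[OF p] by auto
    have "mat d d (\<lambda>(l,j). a (pick T (\<tau> l)) j) = mat d d (\<lambda>(i,j). B $$ (\<tau> i, j))"
      unfolding B_def by (rule eq_matI, auto simp: tl)
    then have 1: "det (mat d d (\<lambda>(l,j). a (pick T (\<tau> l)) j)) = signof \<tau> * det B"
      using det_permute_rows[OF B p] by simp
    have 2: "(\<Prod>l\<in>{0..<d}. a (pick T (\<tau> l)) l) = (\<Prod>l\<in>{0..<d}. B $$ (\<tau> l, l))"
      unfolding B_def by (rule prod.cong, auto simp: tl)
    show "(\<Prod>l\<in>{0..<d}. a (pick T (\<tau> l)) l) * det (mat d d (\<lambda>(l,j). a (pick T (\<tau> l)) j))
      = det B * (signof \<tau> * (\<Prod>l\<in>{0..<d}. B $$ (\<tau> l, l)))"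
      unfolding 1 2 by (simp add: ac_simps)
  qed
  also have "\<dots> = det B * det B"
    unfolding sum_distrib_left[symmetric] det_transpose_sum[OF B] ..
  finally show ?thesis by (simp add: power2_eq_square)
qed

lemma cauchy_binet:
  fixes a :: "nat \<Rightarrow> nat \<Rightarrow> real" and d :: nat and S :: "nat set"
  assumes S: "finite S"
  shows "det (mat d d (\<lambda>(i,j). \<Sum>r\<in>S. a r i * a r j)) =
    (\<Sum>T\<in>{T. T \<subseteq> S \<and> card T = d}. (det (mat d d (\<lambda>(i,j). a (pick T i) j)))^2)"
proof -
  define F where "F = {f. (\<forall>i\<in>{0..<d}. f i \<in> S) \<and> (\<forall>i. i \<notin> {0..<d} \<longrightarrow> f i = i)}"
  define Fi where "Fi = {f\<in>F. inj_on f {0..<d}}"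
  define g where "g = (\<lambda>f. (\<Prod>i\<in>{0..<d}. a (f i) i) * det (mat d d (\<lambda>(i,j). a (f i) j)))"
  define h where "h = (\<lambda>(T::nat set,\<tau>::nat\<Rightarrow>nat). (\<Prod>l\<in>{0..<d}. a (pick T (\<tau> l)) l) *
            det (mat d d (\<lambda>(l,j). a (pick T (\<tau> l)) j)))"
  define TT where "TT = {T. T \<subseteq> S \<and> card T = d}"
  define P where "P = {p. p permutes {0..<d}}"
  define ii where "ii = (\<lambda>(T::nat set,\<tau>::nat\<Rightarrow>nat). \<lambda>l. if l < d then pick T (\<tau> l) else l)"
  define jj where "jj = (\<lambda>f::nat\<Rightarrow>nat. (f ` {0..<d},
     \<lambda>l. if l < d then the_inv_into {0..<d} (pick (f ` {0..<d})) (f l) else l))"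
  have fF: "finite F" unfolding F_def by (rule finite_bounded_functions[OF S], auto)
  have fTT: "finite TT" unfolding TT_def using S by auto
  have fP: "finite P" unfolding P_def by (rule finite_permutations, auto)
  have step1: "det (mat d d (\<lambda>(i,j). \<Sum>r\<in>S. a r i * a r j)) = sum g F"
    unfolding g_def F_def by (rule cb_step1[OF S])
  have "sum g F = sum g Fi + sum g (F - Fi)"
  proof -
    have "Fi \<subseteq> F" unfolding Fi_def by auto
    from sum.subset_diff[OF this fF, of g] show ?thesis by simp
  qed
  also have "sum g (F - Fi) = 0"
    by (rule sum.neutral, auto simp: Fi_def g_def det_noninj_zero)
  finally have step2: "sum g F = sum g Fi" by simp
  have step3: "sum g Fi = sum h (Sigma TT (\<lambda>_. P))"
  proof (rule sum.reindex_bij_witness[where i = ii and j = jj])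
    fix f assume f: "f \<in> Fi"
    define T where "T = f ` {0..<d}"
    have inj: "inj_on f {0..<d}" and fS: "\<And>i. i < d \<Longrightarrow> f i \<in> S"
       and fid: "\<And>i. \<not> i < d \<Longrightarrow> f i = i"
      using f unfolding Fi_def F_def by auto
    have cT: "card T = d" unfolding T_def using card_image[OF inj] by simp
    have TS: "T \<subseteq> S" unfolding T_def using fS by auto
    have bij: "bij_betw (pick T) {0..<d} T" using pick_bij[of T] cT unfolding T_def by simp
    define \<tau> where "\<tau> = (\<lambda>l. if l < d then the_inv_into {0..<d} (pick T) (f l) else l)"
    have jf: "jj f = (T, \<tau>)" unfolding jj_def T_def \<tau>_def by simp
    have fT: "\<And>l. l < d \<Longrightarrow> f l \<in> T" unfolding T_def by auto
    have pt: "\<And>l. l < d \<Longrightarrow> pick T (\<tau> l) = f l"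
      unfolding \<tau>_def using f_the_inv_into_f_bij_betw[OF bij] fT by auto
    have tin: "\<And>l. l < d \<Longrightarrow> \<tau> l < d"
    proof -
      fix l assume l: "l < d"
      have "the_inv_into {0..<d} (pick T) (f l) \<in> {0..<d}"
        using the_inv_into_into[OF bij_betw_imp_inj_on[OF bij], of "f l" "{0..<d}"] bij_betw_imp_surj_on[OF bij] fT[OF l]
        by auto
      then show "\<tau> l < d" unfolding \<tau>_def using l by simp
    qed
    show "ii (jj f) = f"
      unfolding jf ii_def by (auto simp: pt fid)
    have injt: "inj_on \<tau> {0..<d}"
    proof (rule inj_onI)
      fix x y assume xy: "x \<in> {0..<d}" "y \<in> {0..<d}" and e: "\<tau> x = \<tau> y"
      have "f x = f y" using pt[of x] pt[of y] xy e by simp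
      then show "x = y" by (rule inj_onD[OF inj _ xy])
    qed
    have sub: "\<tau> ` {0..<d} \<subseteq> {0..<d}" using tin by auto
    have "\<tau> ` {0..<d} = {0..<d}"
      by (rule endo_inj_surj[OF _ sub injt], simp)
    then have bt: "bij_betw \<tau> {0..<d} {0..<d}" unfolding bij_betw_def using injt by simp
    have "\<And>x. x \<notin> {0..<d} \<Longrightarrow> \<tau> x = x" unfolding \<tau>_def by simp
    then have "\<tau> permutes {0..<d}"
      by (rule bij_imp_permutes[OF bt])
    then show "jj f \<in> Sigma TT (\<lambda>_. P)" unfolding jf TT_def P_def using TS cT by simp
    have m: "mat d d (\<lambda>(l,j). a (pick T (\<tau> l)) j) = mat d d (\<lambda>(i,j). a (f i) j)"
      by (rule eq_matI, simp_all add: pt)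
    have pr: "(\<Prod>l\<in>{0..<d}. a (pick T (\<tau> l)) l) = (\<Prod>i\<in>{0..<d}. a (f i) i)"
      by (rule prod.cong, simp_all add: pt)
    show "h (jj f) = g f"
      unfolding jf h_def g_def using m pr by simp
  next
    fix b assume b: "b \<in> Sigma TT (\<lambda>_. P)"
    then obtain T \<tau> where bT: "b = (T, \<tau>)" and TS: "T \<subseteq> S" and cT: "card T = d"
      and p: "\<tau> permutes {0..<d}" unfolding TT_def P_def by auto
    have fin: "finite T" using TS S finite_subset by auto
    have bij: "bij_betw (pick T) {0..<d} T" using pick_bij[OF fin] cT by simp
    have tl: "\<And>i. i < d \<Longrightarrow> \<tau> i < d" using permutes_in_image[OF p] by auto
    have tid: "\<And>i. \<not> i < d \<Longrightarrow> \<tau> i = i" using permutes_not_in[OF p] by auto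
    have iib: "ii b = (\<lambda>l. if l < d then pick T (\<tau> l) else l)" unfolding bT ii_def by simp
    have img: "ii b ` {0..<d} = T"
    proof -
      have "ii b ` {0..<d} = pick T ` (\<tau> ` {0..<d})" unfolding iib image_image
        by (rule image_cong, simp_all)
      also have "\<tau> ` {0..<d} = {0..<d}" using permutes_image[OF p] .
      finally show ?thesis using bij unfolding bij_betw_def by simp
    qed
    have jjb: "jj (ii b) = (T, \<lambda>l. if l < d then the_inv_into {0..<d} (pick T) (ii b l) else l)"
      unfolding jj_def img by simp
    have "(\<lambda>l. if l < d then the_inv_into {0..<d} (pick T) (ii b l) else l) = \<tau>"
    proof (rule ext)
      fix l
      show "(if l < d then the_inv_into {0..<d} (pick T) (ii b l) else l) = \<tau> l"
      proof (cases "l < d")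
        case True
        then have "ii b l = pick T (\<tau> l)" unfolding iib by simp
        moreover have "\<tau> l \<in> {0..<d}" using tl[OF True] by simp
        ultimately show ?thesis
          using the_inv_into_f_f[OF bij_betw_imp_inj_on[OF bij]] True by simp
      next
        case False
        then show ?thesis using tid[OF False] by simp
      qed
    qed
    then show "jj (ii b) = b" using jjb by (simp add: bT)
    have injii: "inj_on (ii b) {0..<d}"
    proof (rule inj_onI)
      fix x y assume xy: "x \<in> {0..<d}" "y \<in> {0..<d}" and e: "ii b x = ii b y"
      then have "pick T (\<tau> x) = pick T (\<tau> y)" unfolding iib by simp
      moreover have "\<tau> x \<in> {0..<d}" "\<tau> y \<in> {0..<d}" using tl xy by auto
      ultimately have "\<tau> x = \<tau> y" using inj_onD[OF bij_betw_imp_inj_on[OF bij]] by blast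
      then show "x = y" using injD[OF permutes_inj[OF p]] by blast
    qed
    have "\<And>i. i < d \<Longrightarrow> ii b i \<in> S"
    proof -
      fix i assume i: "i < d"
      have "ii b i \<in> ii b ` {0..<d}" using i by simp
      then show "ii b i \<in> S" using img TS by auto
    qed
    moreover have "\<And>i. \<not> i < d \<Longrightarrow> ii b i = i" unfolding iib by simp
    ultimately show "ii b \<in> Fi" unfolding Fi_def F_def using injii by simp
  qed
  have step4: "sum h (Sigma TT (\<lambda>_. P)) = (\<Sum>T\<in>TT. \<Sum>\<tau>\<in>P. h (T,\<tau>))"
    unfolding sum.cartesian_product by simp
  also have "\<dots> = (\<Sum>T\<in>TT. (det (mat d d (\<lambda>(i,j). a (pick T i) j)))^2)"
    unfolding h_def P_def by (simp add: cb_inner)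
  finally show ?thesis using step1 step2 step3 unfolding TT_def by simp
qed

lemma pick_atLeast0: "i < d \<Longrightarrow> pick {0..<d} i = i"
proof -
  assume i: "i < d"
  have "card {a\<in>{0..<d}. a < i} = i"
  proof -
    have "{a\<in>{0..<d}. a < i} = {0..<i}" using i by auto
    then show ?thesis by simp
  qed
  then show ?thesis using pick_card_in_set[of i "{0..<d}"] i by simp
qed

lemma rows_sub_eq:
  assumes X: "X \<in> carrier_mat n d" and T: "T \<subseteq> {0..<n}"
  shows "rows_sub X T = mat (card T) d (\<lambda>(i,j). X $$ (pick T i, j))"
proof -
  have 1: "{i. i < dim_row X \<and> i \<in> T} = T" using X T by auto
  have 2: "{j. j < dim_col X \<and> j \<in> {0..<dim_col X}} = {0..<d}" using X by auto
  show ?thesis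
    unfolding rows_sub_def submatrix_def 1 2
    using X by (intro eq_matI, auto simp: pick_atLeast0)
qed

lemma rows_sub_full:
  assumes X: "X \<in> carrier_mat n d"
  shows "rows_sub X {0..<n} = X"
  unfolding rows_sub_eq[OF X subset_refl]
  by (rule eq_matI, insert X, auto simp: pick_atLeast0)

lemma gram_rows_sub:
  assumes X: "X \<in> carrier_mat n d" and T: "T \<subseteq> {0..<n}"
  shows "transpose_mat (rows_sub X T) * rows_sub X T =
    mat d d (\<lambda>(i,j). \<Sum>r\<in>T. X $$ (r,i) * X $$ (r,j))"
proof -
  have fin: "finite T" using T finite_subset by auto
  have bij: "bij_betw (pick T) {0..<card T} T" by (rule pick_bij[OF fin])
  show ?thesis
  proof (rule eq_matI)
    fix i j assume "i < dim_row (mat d d (\<lambda>(i,j). \<Sum>r\<in>T. X $$ (r,i) * X $$ (r,j)))"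
      "j < dim_col (mat d d (\<lambda>(i,j). \<Sum>r\<in>T. X $$ (r,i) * X $$ (r,j)))"
    then have ij: "i < d" "j < d" by auto
    have "(transpose_mat (rows_sub X T) * rows_sub X T) $$ (i,j) =
       (\<Sum>l\<in>{0..<card T}. X $$ (pick T l, i) * X $$ (pick T l, j))"
      unfolding rows_sub_eq[OF X T] using ij
      by (simp add: scalar_prod_def)
    also have "\<dots> = (\<Sum>r\<in>T. X $$ (r,i) * X $$ (r,j))"
      by (rule sum.reindex_bij_betw[OF bij])
    finally show "(transpose_mat (rows_sub X T) * rows_sub X T) $$ (i,j) =
       mat d d (\<lambda>(i,j). \<Sum>r\<in>T. X $$ (r,i) * X $$ (r,j)) $$ (i,j)" using ij by simp
  qed (auto simp: rows_sub_eq[OF X T])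
qed

lemma cb_rows_sub:
  assumes X: "X \<in> carrier_mat n d" and S: "S \<subseteq> {0..<n}"
  shows "det (transpose_mat (rows_sub X S) * rows_sub X S) =
    (\<Sum>T\<in>{T. T \<subseteq> S \<and> card T = d}. (det (rows_sub X T))^2)"
proof -
  have fin: "finite S" using S finite_subset by auto
  have "det (transpose_mat (rows_sub X S) * rows_sub X S) =
    (\<Sum>T\<in>{T. T \<subseteq> S \<and> card T = d}. (det (mat d d (\<lambda>(i,j). X $$ (pick T i, j))))^2)"
    unfolding gram_rows_sub[OF X S] by (rule cauchy_binet[OF fin])
  also have "\<dots> = (\<Sum>T\<in>{T. T \<subseteq> S \<and> card T = d}. (det (rows_sub X T))^2)"
    by (rule sum.cong[OF refl], subst rows_sub_eq[OF X], insert S, auto)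
  finally show ?thesis .
qed

lemma rank_full_inj:
  fixes X :: "real mat"
  assumes X: "X \<in> carrier_mat n d" and r: "vec_space.rank n X = d"
    and v: "v \<in> carrier_vec d" and Xv: "X *\<^sub>v v = 0\<^sub>v n"
  shows "v = 0\<^sub>v d"
proof -
  interpret vs: vec_space "TYPE(real)" n .
  have dist: "distinct (cols X)"
  proof (rule ccontr)
    assume nd: "\<not> distinct (cols X)"
    obtain A where A: "maximal A (\<lambda>T. T \<subseteq> set (cols X) \<and> vs.lin_indpt T)"
      using maximal_exists[of "(\<lambda>T. T \<subseteq> set (cols X) \<and> vs.lin_indpt T)" "card (set (cols X))" "{}"]
      by (meson List.finite_set card_mono empty_iff empty_subsetI vs.finite_lin_indpt2 rev_finite_subset)
    then have "card A \<le> card (set (cols X))" by (simp add: card_mono maximal_def)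
    moreover have "card (set (cols X)) < d"
      using nd X card_distinct card_length cols_length carrier_matD(2) nat_less_le by metis
    moreover have "vs.rank X = card A" by (rule vs.rank_card_indpt[OF X A])
    ultimately show False using r by simp
  qed
  have li: "vs.lin_indpt (set (cols X))" by (rule vs.full_rank_lin_indpt[OF X r dist])
  show ?thesis
  proof (rule ccontr)
    assume "v \<noteq> 0\<^sub>v d"
    from vs.lin_depI[OF X v this Xv dist] li show False by simp
  qed
qed

lemma gram_pos:
  fixes X :: "real mat"
  assumes X: "X \<in> carrier_mat n d" and r: "vec_space.rank n X = d"
  shows "det (transpose_mat X * X) > 0"
proof -
  have G: "transpose_mat X * X \<in> carrier_mat d d" using X by auto
  have ge: "det (transpose_mat X * X) \<ge> 0"
    using cb_rows_sub[OF X subset_refl] rows_sub_full[OF X] by (simp add: sum_nonneg)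
  have "det (transpose_mat X * X) \<noteq> 0"
  proof
    assume "det (transpose_mat X * X) = 0"
    then obtain v where v: "v \<in> carrier_vec d" "v \<noteq> 0\<^sub>v d" "(transpose_mat X * X) *\<^sub>v v = 0\<^sub>v d"
      using det_0_iff_vec_prod_zero_field[OF G] by blast
    define w where "w = X *\<^sub>v v"
    have w: "w \<in> carrier_vec n" unfolding w_def using X v by auto
    have "(transpose_mat X * X) *\<^sub>v v = transpose_mat X *\<^sub>v w"
      unfolding w_def using X v by (simp add: assoc_mult_mat_vec)
    then have z: "transpose_mat X *\<^sub>v w = 0\<^sub>v d" using v(3) by simp
    have "(transpose_mat X *\<^sub>v w) \<bullet> v = 0" unfolding z using v(1) by simp
    then have ww: "w \<bullet> w = 0" using transpose_vec_mult_scalar[OF X v(1) w] unfolding w_def by simp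
    have "\<forall>i\<in>{0..<n}. w $ i * w $ i = 0"
      using ww w unfolding scalar_prod_def
      by (subst sum_nonneg_eq_0_iff[symmetric], auto)
    then have "w = 0\<^sub>v n" using w by (intro eq_vecI, auto)
    then have "v = 0\<^sub>v d" using rank_full_inj[OF X r v(1)] unfolding w_def by simp
    with v(2) show False by simp
  qed
  with ge show ?thesis by simp
qed

lemma pmf_volume:
  fixes X :: "real mat"
  assumes X: "X \<in> carrier_mat n d" and r: "vec_space.rank n X = d"
  shows "pmf (volume_pmf X) T = (if T \<subseteq> {0..<n} \<and> card T = d
      then (det (rows_sub X T))\<^sup>2 / det (transpose_mat X * X) else 0)"
proof -
  define G where "G = det (transpose_mat X * X)"
  have G: "G > 0" unfolding G_def by (rule gram_pos[OF X r])
  define V where "V = (\<lambda>S0. if S0 \<subseteq> {0..<dim_row X} \<and> card S0 = dim_col X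
      then (det (rows_sub X S0))\<^sup>2 / det (transpose_mat X * X) else 0)"
  define A where "A = {T. T \<subseteq> {0..<n} \<and> card T = d}"
  have dX: "dim_row X = n" "dim_col X = d" using X by auto
  have fA: "finite A" unfolding A_def by auto
  have nn: "\<And>x. 0 \<le> V x" unfolding V_def using G G_def by auto
  have "(\<integral>\<^sup>+x. ennreal (V x) \<partial>count_space UNIV) = (\<Sum>x\<in>A. ennreal (V x))"
    by (rule nn_integral_count_space'[OF fA], auto simp: V_def A_def dX)
  also have "\<dots> = ennreal (\<Sum>x\<in>A. V x)" using nn by (simp add: sum_ennreal)
  also have "(\<Sum>x\<in>A. V x) = (\<Sum>x\<in>A. (det (rows_sub X x))\<^sup>2) / G"
    unfolding V_def G_def A_def dX sum_divide_distrib by (rule sum.cong, auto)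
  also have "(\<Sum>x\<in>A. (det (rows_sub X x))\<^sup>2) = G"
    unfolding A_def G_def using cb_rows_sub[OF X order_refl] rows_sub_full[OF X] by simp
  finally have "(\<integral>\<^sup>+x. ennreal (V x) \<partial>count_space UNIV) = 1" using G by simp
  then have "pmf (embed_pmf V) T = V T" using pmf_embed_pmf[of V T] nn by blast
  then show ?thesis unfolding volume_pmf_def V_def[symmetric] by (simp add: V_def dX)
qed

lemma pmf_inner:
  fixes a S :: "nat set"
  assumes a: "a \<subseteq> {0..<n}" "card a = d" and S: "S \<subseteq> {0..<n}" "card S = k"
    and dk: "d \<le> k" and kn: "k \<le> n"
  shows "pmf (bind_pmf (pmf_of_set {R. R \<subseteq> {0..<n} - a \<and> card R = k - d})
      (\<lambda>R. return_pmf (a \<union> R))) S = (if a \<subseteq> S then 1 / real ((n-d) choose (k-d)) else 0)"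
proof -
  define Rs where "Rs = {R. R \<subseteq> {0..<n} - a \<and> card R = k - d}"
  have fa: "finite a" using a(1) finite_subset by auto
  have fS: "finite S" using S(1) finite_subset by auto
  have cD: "card ({0..<n} - a) = n - d" using a by (simp add: card_Diff_subset fa)
  have cR: "card Rs = (n - d) choose (k - d)"
    unfolding Rs_def using n_subsets[of "{0..<n} - a" "k - d"] cD by simp
  have pos: "(n - d) choose (k - d) > 0" using dk kn by simp
  have fR: "finite Rs" unfolding Rs_def by auto
  have ne: "Rs \<noteq> {}" using cR pos by auto
  have "bind_pmf (pmf_of_set Rs) (\<lambda>R. return_pmf (a \<union> R)) = map_pmf ((\<union>) a) (pmf_of_set Rs)"
    by (simp add: map_pmf_def)
  then have "pmf (bind_pmf (pmf_of_set Rs) (\<lambda>R. return_pmf (a \<union> R))) S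
     = card (Rs \<inter> ((\<union>) a -` {S})) / card Rs"
    by (simp add: pmf_map measure_pmf_of_set[OF ne fR])
  also have "Rs \<inter> ((\<union>) a -` {S}) = (if a \<subseteq> S then {S - a} else {})"
  proof (cases "a \<subseteq> S")
    case True
    have "card (S - a) = k - d" using True S a fa by (simp add: card_Diff_subset)
    then have inR: "S - a \<in> Rs" unfolding Rs_def using S by auto
    have uniq: "\<And>R. R \<in> Rs \<Longrightarrow> a \<union> R = S \<Longrightarrow> R = S - a" unfolding Rs_def by auto
    have un: "a \<union> (S - a) = S" using True by auto
    have "Rs \<inter> ((\<union>) a -` {S}) = {S - a}"
    proof
      show "Rs \<inter> ((\<union>) a -` {S}) \<subseteq> {S - a}" using uniq by blast
      show "{S - a} \<subseteq> Rs \<inter> ((\<union>) a -` {S})" using inR un by simp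
    qed
    then show ?thesis using True by simp
  next
    case False
    have "Rs \<inter> ((\<union>) a -` {S}) = {}" using False by blast
    then show ?thesis using False by simp
  qed
  finally show ?thesis unfolding Rs_def[symmetric] using cR by simp
qed

theorem mainTheorem6:
  fixes X :: "real mat" and n d k :: nat and S :: "nat set"
  assumes "X \<in> carrier_mat n d"
    and "vec_space.rank n X = d"
    and "d \<le> k" and "k \<le> n"
    and "S \<subseteq> {0..<n}" and "card S = k"
  shows "pmf (augmented_pmf X k) S =
    det (transpose_mat (rows_sub X S) * rows_sub X S) /
      (real ((n - d) choose (k - d)) * det (transpose_mat X * X))"
proof -
  note X = assms(1) and r = assms(2) and dk = assms(3) and kn = assms(4) and S = assms(5,6)
  define G where "G = det (transpose_mat X * X)"
  define C where "C = real ((n - d) choose (k - d))"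
  define A where "A = {T. T \<subseteq> {0..<n} \<and> card T = d}"
  define K where "K = (\<lambda>S0. bind_pmf (pmf_of_set {R. R \<subseteq> {0..<n} - S0 \<and> card R = k - d})
        (\<lambda>R. return_pmf (S0 \<union> R)))"
  have dX: "dim_row X = n" "dim_col X = d" using X by auto
  have fA: "finite A" unfolding A_def by auto
  have "pmf (augmented_pmf X k) S = (\<integral>S0. pmf (K S0) S \<partial>measure_pmf (volume_pmf X))"
    unfolding augmented_pmf_def K_def dX pmf_bind ..
  also have "\<dots> = (\<Sum>a\<in>A. pmf (K a) S * pmf (volume_pmf X) a)"
  proof (rule integral_measure_pmf_real[OF fA])
    fix a assume "a \<in> set_pmf (volume_pmf X)"
    then have "pmf (volume_pmf X) a \<noteq> 0" by (simp add: set_pmf_iff)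
    then show "a \<in> A" unfolding pmf_volume[OF X r] A_def by (auto split: if_splits)
  qed
  also have "\<dots> = (\<Sum>a\<in>A. (if a \<subseteq> S then (det (rows_sub X a))\<^sup>2 / (C * G) else 0))"
  proof (rule sum.cong[OF refl])
    fix a assume "a \<in> A"
    then have a: "a \<subseteq> {0..<n}" "card a = d" unfolding A_def by auto
    show "pmf (K a) S * pmf (volume_pmf X) a = (if a \<subseteq> S then (det (rows_sub X a))\<^sup>2 / (C * G) else 0)"
      unfolding K_def pmf_inner[OF a S dk kn] pmf_volume[OF X r] C_def G_def using a by simp
  qed
  also have "\<dots> = (\<Sum>a\<in>{a\<in>A. a \<subseteq> S}. (det (rows_sub X a))\<^sup>2 / (C * G))"
    by (rule sum.inter_filter[symmetric, OF fA])
  also have "{a\<in>A. a \<subseteq> S} = {T. T \<subseteq> S \<and> card T = d}" unfolding A_def using S by auto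
  also have "(\<Sum>a\<in>{T. T \<subseteq> S \<and> card T = d}. (det (rows_sub X a))\<^sup>2 / (C * G))
      = det (transpose_mat (rows_sub X S) * rows_sub X S) / (C * G)"
    unfolding cb_rows_sub[OF X S(1)] sum_divide_distrib ..
  finally show ?thesis unfolding C_def G_def .
qed

end
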